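(* Let $F$, $H$, $X$, $\Omega$, $Q$ and the sequences generated by the IneIREG method be as described in the context, and suppose $H$ is $\mu$-strongly monotone for some $\mu>0$. Suppose $\eta_k\equiv\eta>0$; $\lambda_k\in[\underline\lambda,\overline\lambda]$ for all $k\ge0$ with $0<\underline\lambda\le\overline\lambda<1/L$, $L:=L_F+\eta L_H$; and $\alpha_0\in[0,1]$ and $\alpha_{k+1}\le(1-\beta_k)\alpha_k$ for all $k\ge0$, where $\beta_k:=\big(\frac{1}{1-\lambda_k^2L^2}+\frac{1}{2\lambda_k\eta\mu}\big)^{-1}$. Define $p_k:=\big(\prod_{i=0}^k(1-\beta_i)\big)^{-1}$ for $k\ge0$, for $k\ge1$ $\Lambda_k:=\sum_{j=0}^{k-1}\lambda_j\eta p_j$ and $\overline y_k:=\Lambda_k^{-1}\sum_{j=0}^{k-1}\lambda_j\eta p_jy_j$, and $\beta:=\big(\frac{1}{1-\overline\lambda^2L^2}+\frac{1}{2\underline\lambda\eta\mu}\big)^{-1}\in(0,1)$. Then for all $k\ge1$, $$-B_H\,\mathrm{dist}(\overline y_k,Q)\le\mathrm{Gap}(\overline y_k,H,Q)\le(k+1)(1-\beta)^k\Big(\frac{D_X^2}{\underline\lambda\eta}\Big).$$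
   Context: Work in $\mathbb{R}^n$ with Euclidean inner product $\langle\cdot,\cdot\rangle$ and norm $\|\cdot\|$. The maps $F\colon \mathrm{Dom}\,F\to\mathbb{R}^n$ and $H\colon\mathrm{Dom}\,H\to\mathbb{R}^n$ are monotone and Lipschitz continuous with constants $L_F>0$ and $L_H>0$; $H$ is $\mu$-strongly monotone means $\langle H(x)-H(y),x-y\rangle\ge\mu\|x-y\|^2$ for all $x,y\in\mathrm{Dom}\,H$. $X$ is a nonempty compact convex set and $\Omega$ a nonempty closed convex set with $X\subset\Omega\subset\mathrm{Dom}\,F\cap\mathrm{Dom}\,H$; $P_X,P_\Omega$ denote orthogonal projections. $Q:=\{x\in X:\langle F(x),y-x\rangle\ge0\ \forall y\in X\}$ is assumed nonempty. $D_X:=\sup_{x,y\in X}\|x-y\|$, $B_H:=\sup_{x\in Q}\|H(x)\|$, $\mathrm{dist}(y,Q)$ is the Euclidean distance to $Q$. $\mathrm{Gap}(z,H,Q):=\sup_{x\in Q}\langle H(x),z-x\rangle$. IneIREG method: start with $x_0=x_{-1}\in X$; for $k=0,1,\dots$, with parameters $\alpha_k\ge0$, $\lambda_k>0$, $\eta_k>0$, set $w_k=x_k+\alpha_k(x_k-x_{k-1})$, $w'_k=P_\Omega(w_k)$, $y_k=P_X\big(w_k-\lambda_k(F(w'_k)+\eta_kH(w'_k))\big)$, $x_{k+1}=P_X\big(w_k-\lambda_k(F(y_k)+\eta_kH(y_k))\big)$. *)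

theory Defs
  imports "HOL-Analysis.Analysis"
begin

definition monotone_map :: "'a::euclidean_space set \<Rightarrow> ('a \<Rightarrow> 'a) \<Rightarrow> bool" where
  "monotone_map D F \<longleftrightarrow> (\<forall>x\<in>D. \<forall>y\<in>D. 0 \<le> inner (F x - F y) (x - y))"

definition strongly_monotone_map :: "real \<Rightarrow> 'a::euclidean_space set \<Rightarrow> ('a \<Rightarrow> 'a) \<Rightarrow> bool" where
  "strongly_monotone_map \<mu> D H \<longleftrightarrow> (\<forall>x\<in>D. \<forall>y\<in>D. \<mu> * (norm (x - y))\<^sup>2 \<le> inner (H x - H y) (x - y))"

definition VI_sol :: "('a::euclidean_space \<Rightarrow> 'a) \<Rightarrow> 'a set \<Rightarrow> 'a set" where
  "VI_sol F X = {x \<in> X. \<forall>y\<in>X. 0 \<le> inner (F x) (y - x)}"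

definition Gap :: "'a::euclidean_space \<Rightarrow> ('a \<Rightarrow> 'a) \<Rightarrow> 'a set \<Rightarrow> real" where
  "Gap z H Q = (SUP x\<in>Q. inner (H x) (z - x))"

definition ireg_beta :: "real \<Rightarrow> real \<Rightarrow> real \<Rightarrow> real \<Rightarrow> real" where
  "ireg_beta L \<eta> \<mu> lam = inverse (1 / (1 - lam\<^sup>2 * L\<^sup>2) + 1 / (2 * lam * \<eta> * \<mu>))"

end

theory Submission
  imports Defs
begin


lemma beta_ineq:
  fixes c1 c2 s t :: real
  assumes "c1 > 0" "c2 > 0" "s \<ge> 0" "t \<ge> 0"
  shows "inverse (1/c1 + 1/c2) * (s + t)\<^sup>2 \<le> c1 * s\<^sup>2 + c2 * t\<^sup>2"
proof -
  have e: "inverse (1/c1 + 1/c2) = c1*c2/(c1+c2)" using assms by (simp add: field_simps)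
  have "c1 * c2 * (s+t)\<^sup>2 \<le> (c1+c2)*(c1 * s\<^sup>2 + c2 * t\<^sup>2)"
    using sum_squares_ge_zero[of 0 "c1 * s - c2 * t"] by (simp add: power2_eq_square algebra_simps)
  then show ?thesis unfolding e using assms by (simp add: field_simps)
qed

lemma step_ineq:
  fixes F H :: "'a::euclidean_space \<Rightarrow> 'a"
  assumes F_mono: "monotone_map DF F" and F_lip: "lipschitz_on LF DF F"
    and H_strong: "strongly_monotone_map \<mu> DH H" and H_lip: "lipschitz_on LH DH H"
    and mu_pos: "\<mu> > 0" and eta_pos: "\<eta> > 0" and lpos: "lam > 0"
    and lL: "lam * (LF + \<eta> * LH) < 1"
    and X: "closed X" "convex X" "X \<noteq> {}" and Om: "closed \<Omega>" "convex \<Omega>"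
    and X_sub: "X \<subseteq> \<Omega>" and Om_sub: "\<Omega> \<subseteq> DF \<inter> DH"
    and u: "u \<in> X" "\<forall>t\<in>X. 0 \<le> inner (F u) (t - u)"
    and y: "y = closest_point X (z - lam *\<^sub>R (F (closest_point \<Omega> z) + \<eta> *\<^sub>R H (closest_point \<Omega> z)))"
    and xp: "xp = closest_point X (z - lam *\<^sub>R (F y + \<eta> *\<^sub>R H y))"
  shows "(norm (xp - u))\<^sup>2 \<le> (1 - ireg_beta (LF + \<eta> * LH) \<eta> \<mu> lam) * (norm (z - u))\<^sup>2
           - 2 * lam * \<eta> * inner (H u) (y - u)"
proof -
  define L where "L = LF + \<eta> * LH"
  define G where "G = (\<lambda>v. F v + \<eta> *\<^sub>R H v)"
  define z' where "z' = closest_point \<Omega> z"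
  have Om_ne: "\<Omega> \<noteq> {}" using X X_sub by auto
  have z'O: "z' \<in> \<Omega>" unfolding z'_def using Om Om_ne closest_point_in_set by blast
  have yX: "y \<in> X" unfolding y using X closest_point_in_set by blast
  have xpX: "xp \<in> X" unfolding xp using X closest_point_in_set by blast
  have LF0: "LF \<ge> 0" "LH \<ge> 0" using F_lip H_lip unfolding lipschitz_on_def by auto
  have L0: "L \<ge> 0" unfolding L_def using LF0 eta_pos by simp
  have GL: "norm (G a - G b) \<le> L * norm (a - b)" if "a \<in> \<Omega>" "b \<in> \<Omega>" for a b
  proof -
    have "norm (F a - F b) \<le> LF * norm (a - b)" "norm (H a - H b) \<le> LH * norm (a - b)"
      proof -
      have "a \<in> DF" "b \<in> DF" "a \<in> DH" "b \<in> DH" using that Om_sub by auto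
      then show "norm (F a - F b) \<le> LF * norm (a - b)" "norm (H a - H b) \<le> LH * norm (a - b)"
        using F_lip H_lip unfolding lipschitz_on_def dist_norm by auto
    qed
    moreover have "norm (G a - G b) \<le> norm (F a - F b) + \<eta> * norm (H a - H b)"
    proof -
      have "G a - G b = (F a - F b) + \<eta> *\<^sub>R (H a - H b)" unfolding G_def by (simp add: algebra_simps)
      then show ?thesis using norm_triangle_ineq[of "F a - F b" "\<eta> *\<^sub>R (H a - H b)"] eta_pos by simp
    qed
    moreover have "\<eta> * norm (H a - H b) \<le> \<eta> * (LH * norm (a - b))"
      using calculation(2) eta_pos by (intro mult_left_mono) auto
    moreover have "L * norm (a - b) = LF * norm (a - b) + \<eta> * (LH * norm (a - b))"
      unfolding L_def by (simp add: algebra_simps)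
    ultimately show ?thesis by linarith
  qed
  have z'y: "norm (z' - y) \<le> norm (z - y)"
  proof -
    have "closest_point \<Omega> y = y" using closest_point_self yX X_sub by blast
    then show ?thesis using closest_point_lipschitz[OF Om(2) Om(1) Om_ne, of z y]
      unfolding z'_def dist_norm by simp
  qed
  have p1: "inner ((z - lam *\<^sub>R G y) - xp) (u - xp) \<le> 0"
    unfolding xp G_def using closest_point_dot[OF X(2) X(1) u(1)] by blast
  have p2: "inner ((z - lam *\<^sub>R G z') - y) (xp - y) \<le> 0"
    unfolding y G_def z'_def using closest_point_dot[OF X(2) X(1) xpX] by blast
  have lip2: "inner (G z' - G y) (xp - y) \<le> L * norm (z - y) * norm (xp - y)"
  proof -
    have "inner (G z' - G y) (xp - y) \<le> norm (G z' - G y) * norm (xp - y)"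
      by (rule norm_cauchy_schwarz)
    also have "\<dots> \<le> L * norm (z' - y) * norm (xp - y)"
      using GL[OF z'O] yX X_sub by (simp add: mult_right_mono subset_eq)
    also have "\<dots> \<le> L * norm (z - y) * norm (xp - y)"
      using z'y L0 by (simp add: mult_left_mono mult_right_mono)
    finally show ?thesis .
  qed
  have amgm: "2 * lam * L * norm (z - y) * norm (xp - y) \<le> lam\<^sup>2 * L\<^sup>2 * (norm (z - y))\<^sup>2 + (norm (xp - y))\<^sup>2"
    using sum_squares_ge_zero[of 0 "lam * L * norm (z - y) - norm (xp - y)"]
    by (simp add: power2_eq_square algebra_simps)
  have Fm: "inner (F y) (u - y) \<le> 0"
  proof -
    have "0 \<le> inner (F y - F u) (y - u)" using F_mono yX u X_sub Om_sub unfolding monotone_map_def by blast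
    moreover have "0 \<le> inner (F u) (y - u)" using u yX by blast
    ultimately show ?thesis by (simp add: inner_diff inner_commute algebra_simps)
  qed
  have Hm: "inner (H y) (u - y) \<le> inner (H u) (u - y) - \<mu> * (norm (y - u))\<^sup>2"
  proof -
    have "\<mu> * (norm (y - u))\<^sup>2 \<le> inner (H y - H u) (y - u)" using H_strong yX u X_sub Om_sub unfolding strongly_monotone_map_def by blast
    then show ?thesis by (simp add: inner_diff inner_commute algebra_simps)
  qed
  have Gm: "inner (G y) (u - y) \<le> - \<eta> * inner (H u) (y - u) - \<eta> * \<mu> * (norm (y - u))\<^sup>2"
  proof -
    have "inner (G y) (u - y) = inner (F y) (u - y) + \<eta> * inner (H y) (u - y)"
      unfolding G_def by (simp add: inner_add_left)
    also have "\<dots> \<le> \<eta> * (inner (H u) (u - y) - \<mu> * (norm (y - u))\<^sup>2)"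
      using Fm Hm eta_pos mult_left_mono by (smt (verit))
    finally show ?thesis by (simp add: inner_diff_right algebra_simps)
  qed
  have key: "(norm (xp - u))\<^sup>2 = (norm (z - u))\<^sup>2 - (norm (z - y))\<^sup>2 - (norm (y - xp))\<^sup>2
      + 2 * inner ((z - lam *\<^sub>R G y) - xp) (u - xp) + 2 * inner ((z - lam *\<^sub>R G z') - y) (xp - y)
      + 2 * lam * inner (G z' - G y) (xp - y) + 2 * lam * inner (G y) (u - y)"
    by (simp add: power2_norm_eq_inner inner_diff inner_add inner_commute algebra_simps)
  have c1: "1 - lam\<^sup>2 * L\<^sup>2 > 0"
  proof -
    have "lam * L < 1" "lam * L \<ge> 0" using lL lpos L0 unfolding L_def by auto
    then have "(lam * L)\<^sup>2 < 1" by (simp add: power_less_one_iff abs_if)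
    then show ?thesis by (simp add: power_mult_distrib)
  qed
  have c2: "2 * lam * \<eta> * \<mu> > 0" using lpos eta_pos mu_pos by simp
  have A: "2 * lam * inner (G z' - G y) (xp - y) \<le> 2 * lam * L * norm (z - y) * norm (xp - y)"
  proof -
    have "lam * inner (G z' - G y) (xp - y) \<le> lam * (L * norm (z - y) * norm (xp - y))"
      using lip2 lpos by (intro mult_left_mono) auto
    then show ?thesis by (simp add: mult.assoc)
  qed
  have B: "2 * lam * inner (G y) (u - y) \<le> 0 - 2 * lam * \<eta> * inner (H u) (y - u) - (2 * lam * \<eta> * \<mu>) * (norm (y - u))\<^sup>2"
  proof -
    have "lam * inner (G y) (u - y) \<le> lam * (- \<eta> * inner (H u) (y - u) - \<eta> * \<mu> * (norm (y - u))\<^sup>2)"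
      using Gm lpos by (intro mult_left_mono) auto
    then show ?thesis by (simp add: algebra_simps)
  qed
  have C: "(norm (y - xp))\<^sup>2 = (norm (xp - y))\<^sup>2" by (simp add: norm_minus_commute)
  have D: "(1 - lam\<^sup>2 * L\<^sup>2) * (norm (z - y))\<^sup>2 = (norm (z - y))\<^sup>2 - lam\<^sup>2 * L\<^sup>2 * (norm (z - y))\<^sup>2"
    by (simp add: algebra_simps)
  have main: "(norm (xp - u))\<^sup>2 \<le> (norm (z - u))\<^sup>2 - (1 - lam\<^sup>2 * L\<^sup>2) * (norm (z - y))\<^sup>2
      - (2 * lam * \<eta> * \<mu>) * (norm (y - u))\<^sup>2 - 2 * lam * \<eta> * inner (H u) (y - u)"
    unfolding D using key p1 p2 amgm A B C by linarith
  have tri: "norm (z - u) \<le> norm (z - y) + norm (y - u)"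
    using norm_triangle_ineq[of "z - y" "y - u"] by simp
  have sq: "(norm (z - u))\<^sup>2 \<le> (norm (z - y) + norm (y - u))\<^sup>2"
    using tri by (simp add: power_mono)
  define b where "b = ireg_beta L \<eta> \<mu> lam"
  have b0: "b \<ge> 0" unfolding b_def ireg_beta_def using c1 c2 by simp
  have E: "b * (norm (z - y) + norm (y - u))\<^sup>2 \<le> (1 - lam\<^sup>2 * L\<^sup>2) * (norm (z - y))\<^sup>2 + (2 * lam * \<eta> * \<mu>) * (norm (y - u))\<^sup>2"
    unfolding b_def ireg_beta_def by (rule beta_ineq[OF c1 c2]) auto
  have E2: "b * (norm (z - u))\<^sup>2 \<le> b * (norm (z - y) + norm (y - u))\<^sup>2"
    using sq b0 by (rule mult_left_mono)
  have E3: "(1 - b) * (norm (z - u))\<^sup>2 = (norm (z - u))\<^sup>2 - b * (norm (z - u))\<^sup>2"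
    by (simp add: algebra_simps)
  have "(norm (xp - u))\<^sup>2 \<le> (1 - b) * (norm (z - u))\<^sup>2 - 2 * lam * \<eta> * inner (H u) (y - u)"
    unfolding E3 using main E E2 by linarith
  then show ?thesis unfolding b_def L_def .
qed



lemma telescope:
  fixes a b q c r :: "nat \<Rightarrow> real" and D2 :: real
  assumes a0: "\<And>j. 0 \<le> a j" and aD: "\<And>j. a j \<le> D2" and bD: "\<And>j. b j \<le> D2"
    and bS: "\<And>j. b (Suc j) = a j" and b0: "b 0 = a 0" and q0: "q 0 = 1"
    and cdec: "\<And>j. c (Suc j) \<le> c j" and c0: "c 0 \<le> 1"
    and step: "\<And>j. q (Suc j) * a (Suc j) + r j \<le> q j * a j + c j * (a j - b j) + 2 * c j * D2"
  shows "q k * a k - c k * b k + (\<Sum>j<k. r j) \<le> (2 * real k + 1) * D2 - c k * D2"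
proof (induction k)
  case 0
  have D0: "D2 \<ge> 0" using a0[of 0] aD[of 0] by linarith
  have "(1 - c 0) * a 0 \<le> (1 - c 0) * D2" using c0 aD[of 0] by (intro mult_left_mono) auto
  then show ?case using q0 b0 by (simp add: algebra_simps)
next
  case (Suc k)
  have D0: "D2 \<ge> 0" using a0[of 0] aD[of 0] by linarith
  have ck: "c k \<le> 1"
  proof (induction k)
    case (Suc k) then show ?case using cdec[of k] by linarith
  qed (use c0 in auto)
  have m1: "(c k - c (Suc k)) * a k \<le> (c k - c (Suc k)) * D2" using cdec[of k] aD[of k] by (intro mult_left_mono) auto
  have m2: "c k * D2 \<le> D2" using mult_right_mono[OF ck D0] by simp
  have e: "q (Suc k) * a (Suc k) - c (Suc k) * b (Suc k) + (\<Sum>j<Suc k. r j)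
     = (q (Suc k) * a (Suc k) + r k) - c (Suc k) * a k + (\<Sum>j<k. r j)" using bS by simp
  have e2: "c k * (a k - b k) = c k * a k - c k * b k" by (simp add: algebra_simps)
  have e3: "(c k - c (Suc k)) * a k = c k * a k - c (Suc k) * a k" "(c k - c (Suc k)) * D2 = c k * D2 - c (Suc k) * D2"
    by (simp_all add: algebra_simps)
  have e4: "(2 * real (Suc k) + 1) * D2 = (2 * real k + 1) * D2 + 2 * D2" by (simp add: algebra_simps)
  show ?case unfolding e e4 using Suc.IH step[of k] m1 m2 e2 e3 by linarith
qed

lemma inertial:
  fixes x xp u :: "'a::real_inner"
  assumes "0 \<le> \<alpha>" "\<alpha> \<le> 1" "norm (x - xp) \<le> D"
  shows "(norm (x + \<alpha> *\<^sub>R (x - xp) - u))\<^sup>2 \<le> (norm (x - u))\<^sup>2 + \<alpha> * ((norm (x - u))\<^sup>2 - (norm (xp - u))\<^sup>2) + 2 * \<alpha> * D\<^sup>2"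
proof -
  have id: "(norm (x + \<alpha> *\<^sub>R (x - xp) - u))\<^sup>2 = (norm (x - u))\<^sup>2 + \<alpha> * ((norm (x - u))\<^sup>2 - (norm (xp - u))\<^sup>2) + \<alpha> * (1 + \<alpha>) * (norm (x - xp))\<^sup>2"
    by (simp add: power2_norm_eq_inner inner_diff inner_add inner_commute algebra_simps)
  have "(norm (x - xp))\<^sup>2 \<le> D\<^sup>2" using assms(3) by (simp add: power_mono)
  then have "\<alpha> * (1 + \<alpha>) * (norm (x - xp))\<^sup>2 \<le> \<alpha> * (1 + \<alpha>) * D\<^sup>2" using assms by (intro mult_left_mono) auto
  also have "\<dots> \<le> \<alpha> * 2 * D\<^sup>2" using assms by (intro mult_right_mono mult_left_mono) auto
  finally show ?thesis unfolding id by simp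
qed



theorem corollary4p14:
  fixes F H :: "'a::euclidean_space \<Rightarrow> 'a"
    and DF DH X \<Omega> :: "'a set"
    and LF LH \<mu> \<eta> lam_lo lam_hi :: real
    and \<alpha> lam :: "nat \<Rightarrow> real"
    and x w y :: "nat \<Rightarrow> 'a"
  defines "L \<equiv> LF + \<eta> * LH"
  defines "\<beta>k \<equiv> (\<lambda>k. ireg_beta L \<eta> \<mu> (lam k))"
  defines "p \<equiv> (\<lambda>k. inverse (\<Prod>i\<in>{0..k}. 1 - \<beta>k i))"
  defines "\<Lambda> \<equiv> (\<lambda>k. \<Sum>j<k. lam j * \<eta> * p j)"
  defines "ybar \<equiv> (\<lambda>k. inverse (\<Lambda> k) *\<^sub>R (\<Sum>j<k. (lam j * \<eta> * p j) *\<^sub>R y j))"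
  defines "\<beta> \<equiv> inverse (1 / (1 - lam_hi\<^sup>2 * L\<^sup>2) + 1 / (2 * lam_lo * \<eta> * \<mu>))"
  defines "Q \<equiv> VI_sol F X"
  defines "BH \<equiv> (SUP q\<in>Q. norm (H q))"
  assumes F_mono: "monotone_map DF F" and F_lip: "lipschitz_on LF DF F" and LF_pos: "LF > 0"
    and H_mono: "monotone_map DH H" and H_lip: "lipschitz_on LH DH H" and LH_pos: "LH > 0"
    and H_strong: "strongly_monotone_map \<mu> DH H" and mu_pos: "\<mu> > 0"
    and X_ne: "X \<noteq> {}" and X_compact: "compact X" and X_convex: "convex X"
    and Om_ne: "\<Omega> \<noteq> {}" and Om_closed: "closed \<Omega>" and Om_convex: "convex \<Omega>"
    and X_sub: "X \<subseteq> \<Omega>" and Om_sub: "\<Omega> \<subseteq> DF \<inter> DH"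
    and Q_ne: "Q \<noteq> {}"
    and eta_pos: "\<eta> > 0"
    and lam_bounds: "0 < lam_lo" "lam_lo \<le> lam_hi" "lam_hi < 1 / L"
    and lam_range: "\<And>k. lam_lo \<le> lam k \<and> lam k \<le> lam_hi"
    and alpha_nonneg: "\<And>k. 0 \<le> \<alpha> k"
    and alpha0: "\<alpha> 0 \<le> 1"
    and alpha_dec: "\<And>k. \<alpha> (Suc k) \<le> (1 - \<beta>k k) * \<alpha> k"
    and x0: "x 0 \<in> X"
    and w_def: "\<And>k. w k = x k + \<alpha> k *\<^sub>R (x k - (case k of 0 \<Rightarrow> x 0 | Suc j \<Rightarrow> x j))"
    and y_def: "\<And>k. y k = closest_point X (w k - lam k *\<^sub>R
                   (F (closest_point \<Omega> (w k)) + \<eta> *\<^sub>R H (closest_point \<Omega> (w k))))"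
    and x_def: "\<And>k. x (Suc k) = closest_point X (w k - lam k *\<^sub>R (F (y k) + \<eta> *\<^sub>R H (y k)))"
    and k_pos: "k \<ge> 1"
  shows "- BH * infdist (ybar k) Q \<le> Gap (ybar k) H Q
         \<and> Gap (ybar k) H Q \<le> real (k + 1) * (1 - \<beta>) ^ k * ((diameter X)\<^sup>2 / (lam_lo * \<eta>))"
proof -
  have L_def: "L = LF + \<eta> * LH" using assms(1) by simp
  have bk_def: "\<And>j. \<beta>k j = ireg_beta L \<eta> \<mu> (lam j)" using assms(2) by simp
  have p_def: "\<And>j. p j = inverse (\<Prod>i\<in>{0..j}. 1 - \<beta>k i)" using assms(3) by simp
  have Lam_def: "\<And>j. \<Lambda> j = (\<Sum>i<j. lam i * \<eta> * p i)" using assms(4) by simp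
  have ybar_def: "\<And>j. ybar j = inverse (\<Lambda> j) *\<^sub>R (\<Sum>i<j. (lam i * \<eta> * p i) *\<^sub>R y i)" using assms(5) by simp
  have beta_def: "\<beta> = inverse (1 / (1 - lam_hi\<^sup>2 * L\<^sup>2) + 1 / (2 * lam_lo * \<eta> * \<mu>))" using assms(6) by simp
  have Q_def: "Q = VI_sol F X" using assms(7) by simp
  have BH_def: "BH = (SUP q\<in>Q. norm (H q))" using assms(8) by simp
  have Xc: "closed X" using X_compact compact_imp_closed by blast
  have Xb: "bounded X" using X_compact compact_imp_bounded by blast
  define D where "D = diameter X"
  have Dd: "\<And>a b. a \<in> X \<Longrightarrow> b \<in> X \<Longrightarrow> norm (a - b) \<le> D"
    unfolding D_def using diameter_bounded_bound[OF Xb] dist_norm by metis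
  have D0: "D \<ge> 0" using Dd[of "SOME x. x \<in> X" "SOME x. x \<in> X"] X_ne some_in_eq by auto
  have xX: "\<And>j. x j \<in> X"
  proof -
    fix j show "x j \<in> X"
    proof (cases j)
      case 0 then show ?thesis using x0 by simp
    next
      case (Suc i) then show ?thesis using x_def[of i] closest_point_in_set[OF Xc X_ne] by simp
    qed
  qed
  have yX: "\<And>j. y j \<in> X" using y_def closest_point_in_set[OF Xc X_ne] by simp
  have LF0: "LF \<ge> 0" "LH \<ge> 0" using F_lip H_lip unfolding lipschitz_on_def by auto
  have Lpos: "L > 0" unfolding L_def using LF_pos LH_pos eta_pos by (simp add: add_pos_nonneg)
  have hiL: "lam_hi * L < 1" using lam_bounds(3) Lpos by (simp add: field_simps)
  have lampos: "\<And>j. lam j > 0" using lam_range lam_bounds(1) by (meson less_le_trans)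
  have lamL: "\<And>j. lam j * L < 1"
    using lam_range hiL Lpos by (meson le_less_trans mult_right_mono less_imp_le)
  have c1pos: "\<And>l. 0 < l \<Longrightarrow> l \<le> lam_hi \<Longrightarrow> 0 < 1 - l\<^sup>2 * L\<^sup>2 \<and> 1 - l\<^sup>2 * L\<^sup>2 \<le> 1 \<and> 1 - lam_hi\<^sup>2 * L\<^sup>2 \<le> 1 - l\<^sup>2 * L\<^sup>2"
  proof -
    fix l :: real assume l: "0 < l" "l \<le> lam_hi"
    have "l * L \<le> lam_hi * L" using l Lpos by (intro mult_right_mono) auto
    then have "l * L < 1" using hiL by linarith
    have "0 \<le> l * L" using l Lpos by simp
    with \<open>l * L < 1\<close> have "(l * L)\<^sup>2 < 1" by (simp add: power_less_one_iff abs_if)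
    moreover have "(l * L)\<^sup>2 \<le> (lam_hi * L)\<^sup>2" using l Lpos by (intro power_mono mult_right_mono) auto
    ultimately show "0 < 1 - l\<^sup>2 * L\<^sup>2 \<and> 1 - l\<^sup>2 * L\<^sup>2 \<le> 1 \<and> 1 - lam_hi\<^sup>2 * L\<^sup>2 \<le> 1 - l\<^sup>2 * L\<^sup>2"
      by (simp add: power_mult_distrib)
  qed
  have hi_pos: "0 < lam_hi" using lam_bounds by linarith
  have bk_prop: "\<And>j. \<beta> \<le> \<beta>k j \<and> 0 < \<beta>k j \<and> \<beta>k j < 1"
  proof -
    fix j
    define c1 where "c1 = 1 - (lam j)\<^sup>2 * L\<^sup>2"
    define c2 where "c2 = 2 * lam j * \<eta> * \<mu>"
    define d1 where "d1 = 1 - lam_hi\<^sup>2 * L\<^sup>2"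
    define d2 where "d2 = 2 * lam_lo * \<eta> * \<mu>"
    have h: "0 < c1" "c1 \<le> 1" "d1 \<le> c1" using c1pos[OF lampos[of j]] lam_range[of j] unfolding c1_def d1_def by auto
    have d1p: "0 < d1" using c1pos[OF hi_pos] unfolding d1_def by auto
    have c2p: "0 < c2" "d2 \<le> c2" "0 < d2" unfolding c2_def d2_def using lampos[of j] eta_pos mu_pos lam_range[of j] lam_bounds
      by (auto intro!: mult_right_mono)
    have s1: "1 / c1 + 1 / c2 \<le> 1 / d1 + 1 / d2" using h d1p c2p
      by (intro add_mono divide_left_mono) auto
    have s2: "1 < 1 / c1 + 1 / c2" using h c2p by (smt (verit) le_divide_eq_1_pos divide_pos_pos)
    have bk: "\<beta>k j = inverse (1 / c1 + 1 / c2)" unfolding bk_def ireg_beta_def c1_def c2_def ..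
    have b: "\<beta> = inverse (1 / d1 + 1 / d2)" unfolding beta_def d1_def d2_def ..
    show "\<beta> \<le> \<beta>k j \<and> 0 < \<beta>k j \<and> \<beta>k j < 1" unfolding bk b using s1 s2
      by (auto intro!: le_imp_inverse_le simp: inverse_less_1_iff)
  qed
  have beta_lt: "\<beta> < 1" using bk_prop[of 0] by linarith
  define q where "q = (\<lambda>j. inverse (\<Prod>i<j. 1 - \<beta>k i))"
  have prodpos: "\<And>j. 0 < (\<Prod>i<j. 1 - \<beta>k i)" using bk_prop by (intro prod_pos) auto
  have qpos: "\<And>j. 0 < q j" unfolding q_def using prodpos by simp
  have q0: "q 0 = 1" unfolding q_def by simp
  have qS: "\<And>j. q (Suc j) * (1 - \<beta>k j) = q j"
  proof -
    fix j
    have ne: "1 - \<beta>k j \<noteq> 0" using bk_prop[of j] by simp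
    show "q (Suc j) * (1 - \<beta>k j) = q j" unfolding q_def prod.lessThan_Suc
      using ne prodpos[of j] by (simp add: inverse_mult_distrib)
  qed
  have pq: "\<And>j. p j = q (Suc j)" unfolding p_def q_def
    by (simp add: atLeast0AtMost lessThan_Suc_atMost)
  have qlow: "\<And>j. inverse (q j) \<le> (1 - \<beta>) ^ j"
  proof -
    fix j
    have "(\<Prod>i<j. 1 - \<beta>k i) \<le> (\<Prod>i<j. 1 - \<beta>)"
      using bk_prop by (intro prod_mono) (auto simp: less_imp_le)
    then show "inverse (q j) \<le> (1 - \<beta>) ^ j" unfolding q_def by simp
  qed
  have alpha_le1: "\<And>j. \<alpha> j \<le> 1"
  proof -
    fix j show "\<alpha> j \<le> 1"
    proof (induction j)
      case 0 then show ?case using alpha0 .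
    next
      case (Suc j)
      have "(1 - \<beta>k j) * \<alpha> j \<le> \<alpha> j" using bk_prop[of j] alpha_nonneg[of j]
        by (simp add: mult_left_le_one_le)
      then show ?case using alpha_dec[of j] Suc.IH by linarith
    qed
  qed
  define c where "c = (\<lambda>j. \<alpha> j * q j)"
  have cdec: "\<And>j. c (Suc j) \<le> c j"
  proof -
    fix j
    have "\<alpha> (Suc j) * q (Suc j) \<le> ((1 - \<beta>k j) * \<alpha> j) * q (Suc j)"
      using alpha_dec[of j] qpos[of "Suc j"] by (intro mult_right_mono) auto
    also have "\<dots> = \<alpha> j * (q (Suc j) * (1 - \<beta>k j))" by (simp add: algebra_simps)
    also have "\<dots> = \<alpha> j * q j" using qS[of j] by simp
    finally show "c (Suc j) \<le> c j" unfolding c_def .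
  qed
  have c0: "c 0 \<le> 1" unfolding c_def q0 using alpha0 by simp
  define prev where "prev = (\<lambda>j. case j of 0 \<Rightarrow> x 0 | Suc i \<Rightarrow> x i)"
  have prevX: "\<And>j. prev j \<in> X" unfolding prev_def using xX by (simp split: nat.split)
  have wj: "\<And>j. w j = x j + \<alpha> j *\<^sub>R (x j - prev j)" unfolding prev_def using w_def by simp
  have Hbound: "\<And>u. u \<in> Q \<Longrightarrow> inner (H u) (ybar k - u) \<le> real (k + 1) * (1 - \<beta>) ^ k * ((diameter X)\<^sup>2 / (lam_lo * \<eta>))"
  proof -
    fix u assume uQ: "u \<in> Q"
    have uX: "u \<in> X" and uVI: "\<forall>t\<in>X. 0 \<le> inner (F u) (t - u)" using uQ unfolding Q_def VI_sol_def by auto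
    define a where "a = (\<lambda>j. (norm (x j - u))\<^sup>2)"
    define b where "b = (\<lambda>j. (norm (prev j - u))\<^sup>2)"
    define g where "g = (\<lambda>j. inner (H u) (y j - u))"
    define r where "r = (\<lambda>j. 2 * (lam j * \<eta> * q (Suc j)) * g j)"
    have stp: "\<And>j. a (Suc j) \<le> (1 - \<beta>k j) * (norm (w j - u))\<^sup>2 - 2 * lam j * \<eta> * g j"
      unfolding a_def g_def bk_def L_def
      by (rule step_ineq[OF F_mono F_lip H_strong H_lip mu_pos eta_pos lampos lamL[unfolded L_def]
            Xc X_convex X_ne Om_closed Om_convex X_sub Om_sub uX uVI y_def x_def])
    have inr: "\<And>j. (norm (w j - u))\<^sup>2 \<le> a j + \<alpha> j * (a j - b j) + 2 * \<alpha> j * D\<^sup>2"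
      unfolding wj a_def b_def
      by (rule inertial[OF alpha_nonneg alpha_le1 Dd[OF xX prevX]])
    have D2: "\<And>j. a j \<le> D\<^sup>2" "\<And>j. b j \<le> D\<^sup>2" "\<And>j. 0 \<le> a j" "\<And>j. 0 \<le> b j"
      unfolding a_def b_def using Dd[OF xX uX] Dd[OF prevX uX] by (auto intro: power_mono)
    have step2: "\<And>j. q (Suc j) * a (Suc j) + r j \<le> q j * a j + c j * (a j - b j) + 2 * c j * D\<^sup>2"
    proof -
      fix j
      have "q (Suc j) * a (Suc j) \<le> q (Suc j) * ((1 - \<beta>k j) * (norm (w j - u))\<^sup>2 - 2 * lam j * \<eta> * g j)"
        using stp[of j] qpos[of "Suc j"] by (intro mult_left_mono) auto
      also have "\<dots> = (q (Suc j) * (1 - \<beta>k j)) * (norm (w j - u))\<^sup>2 - r j"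
        unfolding r_def by (simp add: algebra_simps)
      also have "\<dots> = q j * (norm (w j - u))\<^sup>2 - r j"
        using qS[of j] by simp
      also have "q j * (norm (w j - u))\<^sup>2 \<le> q j * (a j + \<alpha> j * (a j - b j) + 2 * \<alpha> j * D\<^sup>2)"
        using inr[of j] qpos[of j] by (intro mult_left_mono) auto
      also have "\<dots> = q j * a j + c j * (a j - b j) + 2 * c j * D\<^sup>2"
        unfolding c_def by (simp add: algebra_simps)
      finally show "q (Suc j) * a (Suc j) + r j \<le> q j * a j + c j * (a j - b j) + 2 * c j * D\<^sup>2" by simp
    qed
    have bS: "\<And>j. b (Suc j) = a j" "b 0 = a 0" unfolding a_def b_def prev_def by auto
    have tel: "q k * a k - c k * b k + (\<Sum>j<k. r j) \<le> (2 * real k + 1) * D\<^sup>2 - c k * D\<^sup>2"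
      by (rule telescope[OF D2(3,1,2) bS q0 cdec c0 step2])
    have cnn: "0 \<le> c k" unfolding c_def using alpha_nonneg[of k] qpos[of k] by simp
    have "c k * b k \<le> c k * D\<^sup>2" using D2(2)[of k] cnn by (rule mult_left_mono)
    moreover have "0 \<le> q k * a k" using qpos[of k] D2(3)[of k] by simp
    ultimately have sumr: "(\<Sum>j<k. r j) \<le> (2 * real k + 1) * D\<^sup>2" using tel by linarith
    define wt where "wt = (\<lambda>j. lam j * \<eta> * p j)"
    have wt0: "\<And>j. 0 \<le> wt j" unfolding wt_def pq using lampos qpos eta_pos by (simp add: less_imp_le)
    have Lam: "\<Lambda> k = (\<Sum>j<k. wt j)" unfolding Lam_def wt_def ..
    have Lamlow: "lam_lo * \<eta> * q k \<le> \<Lambda> k"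
    proof -
      obtain k' where k': "k = Suc k'" using k_pos by (cases k) auto
      have "wt k' \<le> (\<Sum>j<k. wt j)" using wt0 k' by (intro member_le_sum) auto
      moreover have "lam_lo * \<eta> * q k \<le> wt k'" unfolding wt_def pq k'
        using lam_range[of k'] eta_pos qpos[of "Suc k'"] by (intro mult_right_mono) auto
      ultimately show ?thesis unfolding Lam by linarith
    qed
    have lowpos: "0 < lam_lo * \<eta> * q k" using lam_bounds(1) eta_pos qpos[of k] by simp
    have Lampos: "0 < \<Lambda> k" using Lamlow lowpos by linarith
    have ydiff: "ybar k - u = inverse (\<Lambda> k) *\<^sub>R (\<Sum>j<k. wt j *\<^sub>R (y j - u))"
    proof -
      have "(\<Sum>j<k. wt j *\<^sub>R (y j - u)) = (\<Sum>j<k. wt j *\<^sub>R y j) - \<Lambda> k *\<^sub>R u"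
        unfolding Lam by (simp add: scaleR_diff_right sum_subtractf scaleR_sum_left)
      then show ?thesis unfolding ybar_def wt_def using Lampos by (simp add: scaleR_diff_right)
    qed
    have sr: "(\<Sum>j<k. r j) = 2 * (\<Sum>j<k. wt j * g j)" unfolding r_def wt_def pq
      by (simp add: sum_distrib_left mult.assoc)
    have inn0: "inner (H u) (ybar k - u) = inverse (\<Lambda> k) * (\<Sum>j<k. wt j * g j)"
      unfolding ydiff g_def by (simp add: inner_sum_right)
    have inn: "inner (H u) (ybar k - u) = inverse (\<Lambda> k) * (\<Sum>j<k. r j) / 2"
      unfolding inn0 sr by simp
    have invL: "inverse (\<Lambda> k) \<le> (1 - \<beta>) ^ k / (lam_lo * \<eta>)"
    proof -
      have "inverse (\<Lambda> k) \<le> inverse (lam_lo * \<eta> * q k)" using Lamlow lowpos by (rule le_imp_inverse_le)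
      also have "\<dots> = inverse (q k) / (lam_lo * \<eta>)" by (simp add: field_simps)
      also have "\<dots> \<le> (1 - \<beta>) ^ k / (lam_lo * \<eta>)" using qlow[of k] lam_bounds(1) eta_pos
        by (intro divide_right_mono) auto
      finally show ?thesis .
    qed
    have "inverse (\<Lambda> k) * (\<Sum>j<k. r j) / 2 \<le> inverse (\<Lambda> k) * ((2 * real k + 1) * D\<^sup>2) / 2"
      using sumr Lampos by (intro divide_right_mono mult_left_mono) auto
    also have "\<dots> = inverse (\<Lambda> k) * ((2 * real k + 1) * D\<^sup>2 / 2)" by simp
    also have "\<dots> \<le> inverse (\<Lambda> k) * (real (k + 1) * D\<^sup>2)"
    proof (rule mult_left_mono)
      have "(2 * real k + 1) * D\<^sup>2 \<le> (2 * real k + 2) * D\<^sup>2" using D0 by (intro mult_right_mono) auto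
      then show "(2 * real k + 1) * D\<^sup>2 / 2 \<le> real (k + 1) * D\<^sup>2" by (simp add: field_simps)
    qed (use Lampos in simp)
    also have "\<dots> \<le> (1 - \<beta>) ^ k / (lam_lo * \<eta>) * (real (k + 1) * D\<^sup>2)"
      using invL D0 by (intro mult_right_mono) auto
    also have "\<dots> = real (k + 1) * (1 - \<beta>) ^ k * ((diameter X)\<^sup>2 / (lam_lo * \<eta>))"
      unfolding D_def by (simp add: field_simps)
    finally show "inner (H u) (ybar k - u) \<le> real (k + 1) * (1 - \<beta>) ^ k * ((diameter X)\<^sup>2 / (lam_lo * \<eta>))"
      unfolding inn .
  qed
  define M where "M = real (k + 1) * (1 - \<beta>) ^ k * ((diameter X)\<^sup>2 / (lam_lo * \<eta>))"
  have upper: "Gap (ybar k) H Q \<le> M"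
    unfolding Gap_def M_def using Q_ne Hbound by (intro cSUP_least) auto
  have bddG: "bdd_above ((\<lambda>u. inner (H u) (ybar k - u)) ` Q)"
    using Hbound by (intro bdd_aboveI2) auto
  have QX: "Q \<subseteq> X" unfolding Q_def VI_sol_def by auto
  obtain x00 where x00: "x00 \<in> X" using X_ne by auto
  have bddH: "bdd_above ((\<lambda>u. norm (H u)) ` Q)"
  proof (intro bdd_aboveI2)
    fix u assume "u \<in> Q"
    then have uX: "u \<in> X" using QX by auto
    have "norm (H u - H x00) \<le> LH * norm (u - x00)"
      using H_lip uX x00 X_sub Om_sub unfolding lipschitz_on_def dist_norm by blast
    also have "\<dots> \<le> LH * D" using Dd[OF uX x00] LF0 by (intro mult_left_mono) auto
    finally show "norm (H u) \<le> norm (H x00) + LH * D" using norm_triangle_ineq2[of "H u" "H x00"] by linarith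
  qed
  have lowq: "- BH * norm (ybar k - u) \<le> Gap (ybar k) H Q" if uQ: "u \<in> Q" for u
  proof -
    have "norm (H u) \<le> BH" unfolding BH_def using bddH uQ by (rule cSUP_upper2) auto
    then have "- BH * norm (ybar k - u) \<le> - norm (H u) * norm (ybar k - u)"
      by (intro mult_right_mono) auto
    also have "\<dots> \<le> inner (H u) (ybar k - u)"
      using Cauchy_Schwarz_ineq2[of "H u" "ybar k - u"] by linarith
    also have "\<dots> \<le> Gap (ybar k) H Q" unfolding Gap_def using bddG uQ by (rule cSUP_upper2) auto
    finally show ?thesis .
  qed
  obtain u0 where u0: "u0 \<in> Q" using Q_ne by auto
  have BH0: "0 \<le> BH"
    unfolding BH_def using bddH u0 by (rule cSUP_upper2) auto
  have lower: "- BH * infdist (ybar k) Q \<le> Gap (ybar k) H Q"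
  proof (cases "BH = 0")
    case True
    then show ?thesis using lowq[OF u0] by simp
  next
    case False
    then have BHp: "BH > 0" using BH0 by simp
    have "- Gap (ybar k) H Q / BH \<le> infdist (ybar k) Q"
      unfolding infdist_notempty[OF Q_ne]
    proof (rule cINF_greatest[OF Q_ne])
      fix u assume "u \<in> Q"
      then have "- BH * norm (ybar k - u) \<le> Gap (ybar k) H Q" by (rule lowq)
      then show "- Gap (ybar k) H Q / BH \<le> dist (ybar k) u" using BHp
        by (simp add: dist_norm field_simps)
    qed
    then show ?thesis using BHp by (simp add: field_simps)
  qed
  show ?thesis using lower upper unfolding M_def by simp
qed

end
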